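(* Let $m>2$ be an odd integer, $n\ge 1$ an integer, and let $M_{2mn}=\langle a,b : a^m=b^{2n}=1,\ bab^{-1}=a^{-1}\rangle$ be the metacyclic group of order $2mn$. Let $\Gamma_{M_{2mn}}$ be its non-commuting graph. Let $t_1,t_2$ be the two roots of the equation $(m-1)x^2-(2m-5)x-m=0$. Then the spectrum of the distance signless Laplacian matrix $D^Q(\Gamma_{M_{2mn}})$ (eigenvalues counted with multiplicity, multiplicities being added if two of the listed values coincide) consists of: (a) $2mn-4$ with multiplicity $m(n-1)$; (b) $(2m+1)n-4$ with multiplicity $m-1$; (c) $(3m-2)n-4$ with multiplicity $(m-1)n-1$; (d) $nt_k(m-1)+(3mn+n-4)$ with multiplicity $1$, for each $k=1,2$.
   Context: For a finite non-abelian group $G$ with centre $Z(G)$, the non-commuting graph $\Gamma_G$ is the simple undirected graph with vertex set $G\setminus Z(G)$, in which two distinct vertices $u,v$ are adjacent if and only if $uv\ne vu$. For a connected graph $H$, $d_{uv}$ denotes the length of a shortest path between $u$ and $v$; the distance matrix $D(H)$ has $(u,v)$-entry $d_{uv}$. The transmission of a vertex $v$ is $\sum_{u} d_{uv}$, and $Tr(H)$ is the diagonal matrix of vertex transmissions. The distance signless Laplacian matrix is $D^Q(H)=Tr(H)+D(H)$. *)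

theory Defs
  imports "HOL-Algebra.Generated_Groups" "Jordan_Normal_Form.Char_Poly"
begin

definition group_center :: "('a, 'b) monoid_scheme \<Rightarrow> 'a set" where
  "group_center G = {z \<in> carrier G. \<forall>x \<in> carrier G. z \<otimes>\<^bsub>G\<^esub> x = x \<otimes>\<^bsub>G\<^esub> z}"

definition nc_vertices :: "('a, 'b) monoid_scheme \<Rightarrow> 'a set" where
  "nc_vertices G = carrier G - group_center G"

definition nc_adj :: "('a, 'b) monoid_scheme \<Rightarrow> 'a \<Rightarrow> 'a \<Rightarrow> bool" where
  "nc_adj G u v \<longleftrightarrow> u \<in> nc_vertices G \<and> v \<in> nc_vertices G \<and> u \<noteq> v
     \<and> u \<otimes>\<^bsub>G\<^esub> v \<noteq> v \<otimes>\<^bsub>G\<^esub> u"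

text \<open>A walk is a nonempty list of vertices with consecutive entries adjacent;
  its length is the number of edges (length of the list minus one).\<close>
definition nc_walk :: "('a, 'b) monoid_scheme \<Rightarrow> 'a list \<Rightarrow> bool" where
  "nc_walk G xs \<longleftrightarrow> xs \<noteq> [] \<and> set xs \<subseteq> nc_vertices G
     \<and> (\<forall>i. Suc i < length xs \<longrightarrow> nc_adj G (xs ! i) (xs ! Suc i))"

definition nc_dist :: "('a, 'b) monoid_scheme \<Rightarrow> 'a \<Rightarrow> 'a \<Rightarrow> nat" where
  "nc_dist G u v = (LEAST k. \<exists>xs. nc_walk G xs \<and> hd xs = u \<and> last xs = v \<and> length xs = Suc k)"

definition nc_trans :: "('a, 'b) monoid_scheme \<Rightarrow> 'a \<Rightarrow> nat" where
  "nc_trans G v = (\<Sum>u \<in> nc_vertices G. nc_dist G u v)"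

definition nc_DQ :: "('a, 'b) monoid_scheme \<Rightarrow> 'a \<Rightarrow> 'a \<Rightarrow> real" where
  "nc_DQ G u v = (if u = v then real (nc_trans G v) else 0) + real (nc_dist G u v)"

definition nc_DQ_mat :: "('a, 'b) monoid_scheme \<Rightarrow> (nat \<Rightarrow> 'a) \<Rightarrow> real mat" where
  "nc_DQ_mat G f = mat (card (nc_vertices G)) (card (nc_vertices G))
     (\<lambda>(i, j). nc_DQ G (f i) (f j))"

end

theory Submission
  imports Defs
begin

lemma aux_neg_add: "Z \<in> carrier_mat k k \<Longrightarrow> - Z + (1\<^sub>m k + Z) = (1\<^sub>m k :: 'a::ring_1 mat)"
  by (rule eq_matI) auto

lemma sylvester_det:
  fixes X :: "'a :: idom mat"
  assumes X: "X \<in> carrier_mat N k" and Y: "Y \<in> carrier_mat k N"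
  shows "det (1\<^sub>m N + X * Y) = det (1\<^sub>m k + Y * X)"
proof -
  have XY: "X * Y \<in> carrier_mat N N" using X Y by auto
  have YX: "Y * X \<in> carrier_mat k k" using X Y by auto
  let ?M = "four_block_mat (1\<^sub>m N) X (- Y) (1\<^sub>m k)"
  have e1: "four_block_mat (1\<^sub>m N + X * Y) X (0\<^sub>m k N) (1\<^sub>m k) * four_block_mat (1\<^sub>m N) (0\<^sub>m N k) (- Y) (1\<^sub>m k) = ?M"
  proof -
    have "four_block_mat (1\<^sub>m N + X * Y) X (0\<^sub>m k N) (1\<^sub>m k) * four_block_mat (1\<^sub>m N) (0\<^sub>m N k) (- Y) (1\<^sub>m k)
      = four_block_mat ((1\<^sub>m N + X * Y) * 1\<^sub>m N + X * (- Y)) ((1\<^sub>m N + X * Y) * 0\<^sub>m N k + X * 1\<^sub>m k)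
          (0\<^sub>m k N * 1\<^sub>m N + 1\<^sub>m k * (- Y)) (0\<^sub>m k N * 0\<^sub>m N k + 1\<^sub>m k * 1\<^sub>m k)"
      by (rule mult_four_block_mat, insert X Y, auto)
    also have "\<dots> = ?M"
    proof (rule cong_four_block_mat)
      show "(1\<^sub>m N + X * Y) * 1\<^sub>m N + X * - Y = 1\<^sub>m N"
        using X Y XY by (simp add: right_mult_one_mat, intro eq_matI, auto)
      show "(1\<^sub>m N + X * Y) * 0\<^sub>m N k + X * 1\<^sub>m k = X" using X Y by simp
      show "0\<^sub>m k N * 1\<^sub>m N + 1\<^sub>m k * - Y = - Y" using Y by simp
      show "0\<^sub>m k N * 0\<^sub>m N k + 1\<^sub>m k * 1\<^sub>m k = (1\<^sub>m k :: 'a mat)" by (rule eq_matI, auto)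
    qed
    finally show ?thesis .
  qed
  have e2: "four_block_mat (1\<^sub>m N) (0\<^sub>m N k) (- Y) (1\<^sub>m k) * four_block_mat (1\<^sub>m N) X (0\<^sub>m k N) (1\<^sub>m k + Y * X) = ?M"
  proof -
    have "four_block_mat (1\<^sub>m N) (0\<^sub>m N k) (- Y) (1\<^sub>m k) * four_block_mat (1\<^sub>m N) X (0\<^sub>m k N) (1\<^sub>m k + Y * X)
      = four_block_mat (1\<^sub>m N * 1\<^sub>m N + 0\<^sub>m N k * 0\<^sub>m k N) (1\<^sub>m N * X + 0\<^sub>m N k * (1\<^sub>m k + Y * X))
          (- Y * 1\<^sub>m N + 1\<^sub>m k * 0\<^sub>m k N) (- Y * X + 1\<^sub>m k * (1\<^sub>m k + Y * X))"
      by (rule mult_four_block_mat, insert X Y, auto)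
    also have "\<dots> = ?M"
    proof (rule cong_four_block_mat)
      show "1\<^sub>m N * 1\<^sub>m N + 0\<^sub>m N k * 0\<^sub>m k N = (1\<^sub>m N :: 'a mat)" by (rule eq_matI, auto)
      show "1\<^sub>m N * X + 0\<^sub>m N k * (1\<^sub>m k + Y * X) = X" using X Y by simp
      show "- Y * 1\<^sub>m N + 1\<^sub>m k * 0\<^sub>m k N = - Y" using Y by simp
      have "1\<^sub>m k * (1\<^sub>m k + Y * X) = 1\<^sub>m k + Y * X" using YX by (intro left_mult_one_mat[of _ k k], auto)
      then show "- Y * X + 1\<^sub>m k * (1\<^sub>m k + Y * X) = 1\<^sub>m k"
        using uminus_mult_left_mat[of Y X] X Y aux_neg_add[OF YX] by simp
    qed
    finally show ?thesis .
  qed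
  have "det ?M = det (1\<^sub>m N + X * Y)"
    unfolding e1[symmetric]
    by (subst det_mult[of _ "N+k"], insert X Y, auto simp: det_four_block_mat_lower_left_zero[of _ N _ k] det_four_block_mat_upper_right_zero[of _ N _ k])
  moreover have "det ?M = det (1\<^sub>m k + Y * X)"
    unfolding e2[symmetric]
    by (subst det_mult[of _ "N+k"], insert X Y, auto simp: det_four_block_mat_lower_left_zero[of _ N _ k] det_four_block_mat_upper_right_zero[of _ N _ k])
  ultimately show ?thesis by simp
qed

lemma det_diag_mat:
  fixes g :: "nat \<Rightarrow> 'a :: comm_ring_1"
  shows "det (mat N N (\<lambda>(u,v). if u = v then g u else 0)) = (\<Prod>u<N. g u)"
proof -
  have "det (mat N N (\<lambda>(u,v). if u = v then g u else 0)) = prod_list (diag_mat (mat N N (\<lambda>(u,v). if u = v then g u else 0)))"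
    by (rule det_upper_triangular, auto simp: upper_triangular_def)
  also have "\<dots> = prod_list (map g [0..<N])"
    by (simp add: diag_mat_def, intro arg_cong[where f=prod_list] map_cong, auto)
  also have "\<dots> = (\<Prod>u<N. g u)"
    by (simp add: prod.list_conv_set_nth atLeast0LessThan)
  finally show ?thesis .
qed

lemma mult_diag_right:
  fixes M :: "'a :: comm_ring_1 mat"
  assumes "M \<in> carrier_mat n k" "p < n" "q < k"
  shows "(M * mat k k (\<lambda>(p,q). if p = q then g p else 0)) $$ (p,q) = M $$ (p,q) * g q"
proof -
  have "(M * mat k k (\<lambda>(p,q). if p = q then g p else 0)) $$ (p,q) = (\<Sum>l<k. M $$ (p,l) * (if l = q then g l else 0))"
    using assms by (simp add: scalar_prod_def atLeast0LessThan)
  also have "\<dots> = (\<Sum>l<k. if l = q then M $$ (p,q) * g q else 0)" by (rule sum.cong, auto)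
  also have "\<dots> = M $$ (p,q) * g q" using assms by simp
  finally show ?thesis .
qed

lemma mult_diag_left:
  fixes M :: "'a :: comm_ring_1 mat"
  assumes "M \<in> carrier_mat n k" "p < n" "q < k"
  shows "(mat n n (\<lambda>(p,q). if p = q then g p else 0) * M) $$ (p,q) = g p * M $$ (p,q)"
proof -
  have "(mat n n (\<lambda>(p,q). if p = q then g p else 0) * M) $$ (p,q) = (\<Sum>l<n. (if p = l then g p else 0) * M $$ (l,q))"
    using assms by (simp add: scalar_prod_def atLeast0LessThan)
  also have "\<dots> = (\<Sum>l<n. if l = p then g p * M $$ (p,q) else 0)" by (rule sum.cong, auto)
  also have "\<dots> = g p * M $$ (p,q)" using assms by simp
  finally show ?thesis .
qed

lemma equitable_eval:
  fixes A :: "real mat" and \<pi> :: "nat \<Rightarrow> nat" and C :: "nat \<Rightarrow> nat \<Rightarrow> real" and d :: "nat \<Rightarrow> real"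
  assumes A: "A \<in> carrier_mat N N"
  and \<pi>: "\<And>u. u < N \<Longrightarrow> \<pi> u < k"
  and entries: "\<And>u v. u < N \<Longrightarrow> v < N \<Longrightarrow> A $$ (u,v) = C (\<pi> u) (\<pi> v) + (if u = v then d (\<pi> u) else 0)"
  and x: "\<And>p. p < k \<Longrightarrow> x \<noteq> d p"
  defines "s \<equiv> \<lambda>p. card {u. u < N \<and> \<pi> u = p}"
  defines "Q \<equiv> mat k k (\<lambda>(p,q). C p q * real (s q) + (if p = q then d p else 0))"
  shows "poly (char_poly A) x * (\<Prod>p<k. (x - d p)) = (\<Prod>p<k. (x - d p) ^ s p) * poly (char_poly Q) x"
proof -
  have xu: "x - d (\<pi> u) \<noteq> 0" if "u < N" for u using x[OF \<pi>[OF that]] by auto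
  define \<Delta> where "\<Delta> = mat N N (\<lambda>(u,v). if u = v then x - d (\<pi> u) else 0)"
  define R where "R = mat k N (\<lambda>(p,v). C p (\<pi> v))"
  define W where "W = mat N k (\<lambda>(u,p). if \<pi> u = p then 1 / (x - d p) else 0)"
  define Dg where "Dg = mat k k (\<lambda>(p,q). if p = q then x - d p else 0)"
  have cA: "poly (char_poly A) x = det (- char_matrix A x)" by (rule char_poly_matrix[OF A])
  have cQ: "poly (char_poly Q) x = det (- char_matrix Q x)" by (rule char_poly_matrix[of Q k], simp add: Q_def)
  have WR: "(W * R) $$ (u,v) = C (\<pi> u) (\<pi> v) / (x - d (\<pi> u))" if "u < N" "v < N" for u v
  proof -
    have "(W * R) $$ (u,v) = (\<Sum>p<k. (if \<pi> u = p then 1 / (x - d p) else 0) * C p (\<pi> v))"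
      using that by (simp add: W_def R_def scalar_prod_def atLeast0LessThan)
    also have "\<dots> = (\<Sum>p<k. (if p = \<pi> u then C (\<pi> u) (\<pi> v) / (x - d (\<pi> u)) else 0))"
      by (rule sum.cong, auto)
    also have "\<dots> = C (\<pi> u) (\<pi> v) / (x - d (\<pi> u))" using \<pi>[OF that(1)] by simp
    finally show ?thesis .
  qed
  have B: "- char_matrix A x = \<Delta> * (1\<^sub>m N + (- W) * R)"
  proof (rule eq_matI)
    fix u v assume u: "u < dim_row (\<Delta> * (1\<^sub>m N + - W * R))" and v: "v < dim_col (\<Delta> * (1\<^sub>m N + - W * R))"
    hence u: "u < N" and v: "v < N" by (auto simp: \<Delta>_def R_def)
    have "(\<Delta> * (1\<^sub>m N + (- W) * R)) $$ (u,v) = (x - d (\<pi> u)) * (1\<^sub>m N + (- W) * R) $$ (u, v)"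
      unfolding \<Delta>_def by (rule mult_diag_left[of _ N N], insert u v, auto simp: W_def R_def)
    also have "(1\<^sub>m N + (- W) * R) $$ (u, v) = (if u = v then 1 else 0) - (W * R) $$ (u,v)"
      using u v by (simp add: W_def R_def)
    also have "(x - d (\<pi> u)) * ((if u = v then 1 else 0) - (W * R) $$ (u,v)) = (if u = v then x - d (\<pi> u) else 0) - C (\<pi> u) (\<pi> v)"
      using WR[OF u v] xu[OF u] by (auto simp: field_simps)
    also have "\<dots> = (- char_matrix A x) $$ (u,v)"
      using u v A entries[OF u v] by (auto simp: char_matrix_def)
    finally show "(- char_matrix A x) $$ (u,v) = (\<Delta> * (1\<^sub>m N + - W * R)) $$ (u,v)" by simp
  qed (insert A, auto simp: \<Delta>_def R_def W_def char_matrix_def)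
  have RW: "(R * W) $$ (p,q) = C p q * real (s q) / (x - d q)" if "p < k" "q < k" for p q
  proof -
    have "(R * W) $$ (p,q) = (\<Sum>v<N. C p (\<pi> v) * (if \<pi> v = q then 1 / (x - d q) else 0))"
      using that by (simp add: W_def R_def scalar_prod_def atLeast0LessThan)
    also have "\<dots> = (\<Sum>v\<in>{v. v < N \<and> \<pi> v = q}. C p q / (x - d q))"
      by (rule sum.mono_neutral_cong_right, auto)
    also have "\<dots> = C p q * real (s q) / (x - d q)" by (simp add: s_def)
    finally show ?thesis .
  qed
  have G: "(1\<^sub>m k + R * (- W)) * Dg = - char_matrix Q x"
  proof (rule eq_matI)
    fix p q assume p: "p < dim_row (- char_matrix Q x)" and q: "q < dim_col (- char_matrix Q x)"
    hence p: "p < k" and q: "q < k" by (auto simp: Q_def char_matrix_def)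
    have "((1\<^sub>m k + R * (- W)) * Dg) $$ (p,q) = (1\<^sub>m k + R * (- W)) $$ (p, q) * (x - d q)"
      unfolding Dg_def by (rule mult_diag_right[of _ k k], insert p q, auto simp: W_def R_def)
    also have "(1\<^sub>m k + R * (- W)) $$ (p, q) = (if p = q then 1 else 0) - (R * W) $$ (p,q)"
      using p q by (simp add: W_def R_def)
    also have "((if p = q then 1 else 0) - (R * W) $$ (p,q)) * (x - d q) = (if p = q then x - d q else 0) - C p q * real (s q)"
      using RW[OF p q] x[OF q] by (auto simp: field_simps)
    also have "\<dots> = (- char_matrix Q x) $$ (p,q)"
      using p q by (auto simp: char_matrix_def Q_def)
    finally show "((1\<^sub>m k + R * (- W)) * Dg) $$ (p,q) = (- char_matrix Q x) $$ (p,q)" by simp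
  qed (auto simp: Q_def Dg_def char_matrix_def R_def)
  have cW: "- W \<in> carrier_mat N k" and cR: "R \<in> carrier_mat k N" by (auto simp: W_def R_def)
  have dA: "poly (char_poly A) x = det \<Delta> * det (1\<^sub>m k + R * (- W))"
  proof -
    have "det (\<Delta> * (1\<^sub>m N + (- W) * R)) = det \<Delta> * det (1\<^sub>m N + (- W) * R)"
      by (rule det_mult[of _ N], insert cW cR, auto simp: \<Delta>_def)
    then show ?thesis unfolding cA B sylvester_det[OF cW cR] .
  qed
  have dQ: "poly (char_poly Q) x = det (1\<^sub>m k + R * (- W)) * det Dg"
    unfolding cQ G[symmetric]
    by (rule det_mult[of _ k], insert cW cR, auto simp: Dg_def)
  have dD: "det Dg = (\<Prod>p<k. (x - d p))" unfolding Dg_def by (rule det_diag_mat)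
  have dDelta: "det \<Delta> = (\<Prod>u<N. (x - d (\<pi> u)))" unfolding \<Delta>_def by (rule det_diag_mat)
  also have "\<dots> = (\<Prod>p<k. (x - d p) ^ s p)"
  proof -
    have img: "\<pi> ` {..<N} \<subseteq> {..<k}" using \<pi> by auto
    show ?thesis
      using prod.group[of "{..<N}" "{..<k}" \<pi> "\<lambda>u. x - d (\<pi> u)"] img unfolding s_def by simp
  qed
  finally show ?thesis using dA dQ dD by (simp add: ac_simps)
qed

lemma equitable_char_poly:
  fixes A :: "real mat" and \<pi> :: "nat \<Rightarrow> nat" and C :: "nat \<Rightarrow> nat \<Rightarrow> real" and d :: "nat \<Rightarrow> real"
  assumes A: "A \<in> carrier_mat N N"
  and \<pi>: "\<And>u. u < N \<Longrightarrow> \<pi> u < k"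
  and entries: "\<And>u v. u < N \<Longrightarrow> v < N \<Longrightarrow> A $$ (u,v) = C (\<pi> u) (\<pi> v) + (if u = v then d (\<pi> u) else 0)"
  and spos: "\<And>p. p < k \<Longrightarrow> card {u. u < N \<and> \<pi> u = p} \<ge> 1"
  shows "char_poly A = (\<Prod>p<k. [:- d p, 1:] ^ (card {u. u < N \<and> \<pi> u = p} - 1)) *
     char_poly (mat k k (\<lambda>(p,q). C p q * real (card {u. u < N \<and> \<pi> u = q}) + (if p = q then d p else 0)))"
proof -
  define s where "s \<equiv> \<lambda>p. card {u. u < N \<and> \<pi> u = p}"
  define Q where "Q \<equiv> mat k k (\<lambda>(p,q). C p q * real (s q) + (if p = q then d p else 0))"
  define P where "P = (\<Prod>p<k. [:- d p, 1:])"
  define D where "D = char_poly A * P - (\<Prod>p<k. [:- d p, 1:] ^ s p) * char_poly Q"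
  have roots: "poly D x = 0" if "x \<notin> d ` {..<k}" for x
  proof -
    have x: "\<And>p. p < k \<Longrightarrow> x \<noteq> d p" using that by auto
    have "poly (char_poly A) x * (\<Prod>p<k. (x - d p)) = (\<Prod>p<k. (x - d p) ^ s p) * poly (char_poly Q) x"
      unfolding s_def Q_def by (rule equitable_eval[OF A \<pi> entries x], auto)
    then show ?thesis by (simp add: D_def P_def poly_prod)
  qed
  have "D = 0"
  proof (rule ccontr)
    assume "D \<noteq> 0"
    hence fin: "finite {x. poly D x = 0}" by (rule poly_roots_finite)
    have "UNIV - d ` {..<k} \<subseteq> {x. poly D x = 0}" using roots by auto
    moreover have "infinite (UNIV - d ` {..<k} :: real set)"
      by (rule Diff_infinite_finite, auto simp: infinite_UNIV_char_0)
    ultimately show False using fin finite_subset by blast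
  qed
  hence eq: "char_poly A * P = (\<Prod>p<k. [:- d p, 1:] ^ s p) * char_poly Q" by (simp add: D_def)
  have "(\<Prod>p<k. [:- d p, 1:] ^ s p) = (\<Prod>p<k. [:- d p, 1:] * [:- d p, 1:] ^ (s p - 1))"
  proof (rule prod.cong[OF refl])
    fix p assume "p \<in> {..<k}"
    hence "s p \<ge> 1" using spos by (auto simp: s_def)
    then show "[:- d p, 1:] ^ s p = [:- d p, 1:] * [:- d p, 1:] ^ (s p - 1)"
      by (metis Suc_diff_le diff_Suc_1 power_Suc)
  qed
  also have "\<dots> = P * (\<Prod>p<k. [:- d p, 1:] ^ (s p - 1))" unfolding P_def by (rule prod.distrib)
  finally have "char_poly A * P = P * ((\<Prod>p<k. [:- d p, 1:] ^ (s p - 1)) * char_poly Q)"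
    using eq by (simp add: ac_simps)
  moreover have "P \<noteq> 0" by (simp add: P_def)
  ultimately have "char_poly A = (\<Prod>p<k. [:- d p, 1:] ^ (s p - 1)) * char_poly Q"
    by (simp add: ac_simps)
  then show ?thesis by (simp add: s_def Q_def)
qed


lemma det_1x1: "det (mat (Suc 0) (Suc 0) g) = (g (0,0) :: 'a :: comm_ring_1)"
  by (subst det_upper_triangular[of _ 1]) (auto simp: upper_triangular_def diag_mat_def)

lemma det_2x2:
  fixes A :: "'a :: comm_ring_1 mat"
  assumes A: "A \<in> carrier_mat 2 2"
  shows "det A = A $$ (0,0) * A $$ (1,1) - A $$ (0,1) * A $$ (1,0)"
proof -
  have "det A = (\<Sum>i<2. A $$ (i,0) * cofactor A i 0)" by (rule laplace_expansion_column[OF A], simp)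
  also have "\<dots> = A $$ (0,0) * cofactor A 0 0 + A $$ (1,0) * cofactor A 1 0"
    by (simp add: numeral_2_eq_2)
  also have "cofactor A 0 0 = A $$ (1,1)"
    using A unfolding cofactor_def by (simp add: det_1x1 mat_delete_def)
  also have "cofactor A 1 0 = - A $$ (0,1)"
    using A unfolding cofactor_def by (simp add: det_1x1 mat_delete_def)
  finally show ?thesis by (simp add: algebra_simps)
qed


lemma pow_m1_mod:
  fixes m :: nat assumes "m > 0"
  shows "int ((m - 1) ^ j) mod int m = ((-1) ^ j) mod int m"
proof -
  have "int ((m - 1) ^ j) = (int m - 1) ^ j" using assms by (simp add: of_nat_diff)
  also have "\<dots> mod int m = ((int m - 1) mod int m) ^ j mod int m" by (rule power_mod[symmetric])
  also have "(int m - 1) mod int m = (-1) mod int m" by (simp add: mod_diff_left_eq[symmetric])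
  also have "((-1) mod int m) ^ j mod int m = (-1) ^ j mod int m" by (rule power_mod)
  finally show ?thesis .
qed

lemma odd_dvd_double:
  fixes m :: nat and x :: int assumes "odd m"
  shows "int m dvd 2 * x \<longleftrightarrow> int m dvd x"
proof -
  have "coprime (int m) 2" using assms by (simp add: coprime_commute)
  then show ?thesis by (simp add: coprime_dvd_mult_right_iff)
qed

lemma comm_arith:
  fixes m i k :: nat assumes m: "odd m" and i: "i < m" and k: "k < m"
  shows "((i + (m - 1) ^ j * k) mod m = (k + (m - 1) ^ l * i) mod m) \<longleftrightarrow>
    (even j \<and> even l) \<or> (even j \<and> odd l \<and> i = 0) \<or> (odd j \<and> even l \<and> k = 0) \<or> (odd j \<and> odd l \<and> i = k)"
proof -
  have m0: "m > 0" using m by (auto intro: odd_pos)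
  have "((i + (m - 1) ^ j * k) mod m = (k + (m - 1) ^ l * i) mod m) \<longleftrightarrow>
        (int i + int ((m - 1) ^ j) * int k) mod int m = (int k + int ((m - 1) ^ l) * int i) mod int m"
    by (simp only: of_nat_eq_iff[symmetric, where 'a=int] zmod_int of_nat_add of_nat_mult)
  also have "\<dots> \<longleftrightarrow> (int i + (-1) ^ j * int k) mod int m = (int k + (-1) ^ l * int i) mod int m"
  proof -
    have r: "(x + A * y) mod M = (x + A' * y) mod M" if "A mod M = A' mod M" for x y A A' M :: int
    proof -
      have "M dvd A - A'" using that by (simp add: mod_eq_dvd_iff)
      then have "M dvd (A - A') * y" by (rule dvd_mult2)
      then have "M dvd (x + A * y) - (x + A' * y)" by (simp add: algebra_simps)
      then show ?thesis by (simp add: mod_eq_dvd_iff)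
    qed
    show ?thesis using r[OF pow_m1_mod[OF m0, of j]] r[OF pow_m1_mod[OF m0, of l]] by simp
  qed
  also have "\<dots> \<longleftrightarrow> int m dvd ((int i + (-1) ^ j * int k) - (int k + (-1) ^ l * int i))"
    by (rule mod_eq_dvd_iff)
  also have "\<dots> \<longleftrightarrow> (even j \<and> even l) \<or> (even j \<and> odd l \<and> i = 0) \<or> (odd j \<and> even l \<and> k = 0) \<or> (odd j \<and> odd l \<and> i = k)"
  proof -
    have z: "int m dvd int x \<longleftrightarrow> x = 0" if "x < m" for x
      using that by (auto simp: int_dvd_int_iff dest: dvd_imp_le)
    have zd: "int m dvd (int i - int k) \<longleftrightarrow> i = k"
    proof
      assume "int m dvd (int i - int k)"
      then obtain q where q: "int i - int k = int m * q" by (auto elim: dvdE)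
      have "q = 0"
      proof (rule ccontr)
        assume "q \<noteq> 0"
        then have "\<bar>int m * q\<bar> \<ge> int m" by (simp add: abs_mult mult_le_cancel_left1 del: of_nat_mult)
          (smt (verit) mult_le_cancel_left1 of_nat_0_le_iff)
        then show False using q i k by simp
      qed
      then show "i = k" using q by simp
    qed simp
    show ?thesis
    proof (cases "even j"; cases "even l")
      assume "even j" "even l" then show ?thesis by simp
    next
      assume "even j" "odd l"
      then have "(int i + (-1) ^ j * int k) - (int k + (-1) ^ l * int i) = 2 * int i" by simp
      then show ?thesis using \<open>even j\<close> \<open>odd l\<close> odd_dvd_double[OF m, of "int i"] z[OF i] by simp
    next
      assume "odd j" "even l"
      then have "(int i + (-1) ^ j * int k) - (int k + (-1) ^ l * int i) = - (2 * int k)" by simp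
      then show ?thesis using \<open>odd j\<close> \<open>even l\<close> odd_dvd_double[OF m, of "int k"] z[OF k] by simp
    next
      assume "odd j" "odd l"
      then have "(int i + (-1) ^ j * int k) - (int k + (-1) ^ l * int i) = 2 * (int i - int k)" by simp
      then show ?thesis using \<open>odd j\<close> \<open>odd l\<close> odd_dvd_double[OF m, of "int i - int k"] zd by simp
    qed
  qed
  finally show ?thesis .
qed


definition cc :: "nat \<Rightarrow> nat \<Rightarrow> nat \<Rightarrow> nat \<Rightarrow> bool" where
  "cc i j k l \<longleftrightarrow> (even j \<and> even l) \<or> (even j \<and> odd l \<and> i = 0) \<or> (odd j \<and> even l \<and> k = 0) \<or> (odd j \<and> odd l \<and> i = k)"

lemma card_odd_below: "card {j::nat. j < 2 * n \<and> odd j} = n"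
proof -
  have "{j::nat. j < 2 * n \<and> odd j} = (\<lambda>t. 2 * t + 1) ` {..<n}"
    by (auto elim!: oddE simp: image_iff)
  moreover have "inj_on (\<lambda>t::nat. 2 * t + 1) {..<n}" by (auto intro: inj_onI)
  ultimately show ?thesis by (simp add: card_image)
qed

lemma card_even_below: "card {j::nat. j < 2 * n \<and> even j} = n"
proof -
  have "{j::nat. j < 2 * n \<and> even j} = (\<lambda>t. 2 * t) ` {..<n}"
    by (auto elim!: evenE simp: image_iff)
  moreover have "inj_on (\<lambda>t::nat. 2 * t) {..<n}" by (auto intro: inj_onI)
  ultimately show ?thesis by (simp add: card_image)
qed

locale metacyc = group G for G (structure) +
  fixes a b :: 'g and m n :: nat
  assumes odd_m: "odd m" and m2: "m > 2" and n1: "n \<ge> 1"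
    and a: "a \<in> carrier G" and b: "b \<in> carrier G"
    and gen: "carrier G = generate G {a, b}"
    and fin: "finite (carrier G)" and cardG: "card (carrier G) = 2 * m * n"
    and am: "a [^] m = \<one>" and bn: "b [^] (2 * n) = \<one>"
    and rel: "b \<otimes> a \<otimes> inv b = inv a"
begin

definition phi :: "nat \<Rightarrow> nat \<Rightarrow> 'g" where
  "phi i j = a [^] i \<otimes> b [^] j"

lemma phi_closed[simp]: "phi i j \<in> carrier G"
  unfolding phi_def using a b by simp

lemma inv_a: "inv a = a [^] (m - 1)"
proof -
  have "a [^] (m - 1) \<otimes> a = a [^] m"
    using a m2 by (metis nat_pow_Suc Suc_diff_1 less_trans zero_less_numeral)
  then show ?thesis using a am by (metis inv_equality nat_pow_closed)
qed

lemma ba: "b \<otimes> a = a [^] (m - 1) \<otimes> b"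
proof -
  have "b \<otimes> a = b \<otimes> a \<otimes> inv b \<otimes> b" using a b by (simp add: m_assoc)
  also have "\<dots> = a [^] (m - 1) \<otimes> b" using rel inv_a by simp
  finally show ?thesis .
qed

lemma b_ai: "b \<otimes> a [^] i = a [^] ((m - 1) * i) \<otimes> b"
proof (induction i)
  case 0 then show ?case using b by simp
next
  case (Suc i)
  have "b \<otimes> a [^] Suc i = (b \<otimes> a [^] i) \<otimes> a" using a b by (simp add: m_assoc)
  also have "\<dots> = a [^] ((m - 1) * i) \<otimes> (b \<otimes> a)" using Suc a b by (simp add: m_assoc)
  also have "\<dots> = a [^] ((m - 1) * i) \<otimes> a [^] (m - 1) \<otimes> b" using ba a b by (simp add: m_assoc)
  also have "\<dots> = a [^] ((m - 1) * Suc i) \<otimes> b" using a by (simp add: nat_pow_mult add.commute)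
  finally show ?case .
qed

lemma bj_ai: "b [^] j \<otimes> a [^] i = a [^] ((m - 1) ^ j * i) \<otimes> b [^] j"
proof (induction j arbitrary: i)
  case 0 then show ?case using a by simp
next
  case (Suc j)
  have "b [^] Suc j \<otimes> a [^] i = b [^] j \<otimes> (b \<otimes> a [^] i)" using a b by (simp add: m_assoc)
  also have "\<dots> = b [^] j \<otimes> a [^] ((m - 1) * i) \<otimes> b" using a b by (simp add: b_ai m_assoc)
  also have "\<dots> = a [^] ((m - 1) ^ j * ((m - 1) * i)) \<otimes> b [^] j \<otimes> b" using Suc by simp
  also have "\<dots> = a [^] ((m - 1) ^ Suc j * i) \<otimes> b [^] Suc j" using a b by (simp add: m_assoc ac_simps)
  finally show ?case .
qed

lemma phi_mult: "phi i j \<otimes> phi k l = phi (i + (m - 1) ^ j * k) (j + l)"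
proof -
  have "phi i j \<otimes> phi k l = a [^] i \<otimes> (b [^] j \<otimes> a [^] k) \<otimes> b [^] l"
    unfolding phi_def using a b by (simp add: m_assoc)
  also have "\<dots> = a [^] i \<otimes> a [^] ((m - 1) ^ j * k) \<otimes> (b [^] j \<otimes> b [^] l)"
    unfolding bj_ai using a b by (simp add: m_assoc)
  also have "\<dots> = phi (i + (m - 1) ^ j * k) (j + l)"
    unfolding phi_def using a b by (simp add: nat_pow_mult)
  finally show ?thesis .
qed

lemma a_mod: "a [^] i = a [^] (i mod m)"
proof -
  have "a [^] i = a [^] (m * (i div m) + i mod m)" by simp
  also have "\<dots> = (a [^] m) [^] (i div m) \<otimes> a [^] (i mod m)"
    using a by (simp add: nat_pow_mult nat_pow_pow)
  also have "\<dots> = a [^] (i mod m)" using am a by simp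
  finally show ?thesis .
qed

lemma b_mod: "b [^] j = b [^] (j mod (2 * n))"
proof -
  have "b [^] j = b [^] ((2 * n) * (j div (2 * n)) + j mod (2 * n))" by simp
  also have "\<dots> = (b [^] (2 * n)) [^] (j div (2 * n)) \<otimes> b [^] (j mod (2 * n))"
    using b by (simp add: nat_pow_mult nat_pow_pow)
  also have "\<dots> = b [^] (j mod (2 * n))" using bn b by simp
  finally show ?thesis .
qed

lemma phi_mod: "phi i j = phi (i mod m) (j mod (2 * n))"
  unfolding phi_def using a_mod b_mod by metis

definition Dom :: "(nat \<times> nat) set" where "Dom = {..<m} \<times> {..<2 * n}"

definition E :: "'g set" where "E = (\<lambda>(i,j). phi i j) ` Dom"

lemma finite_Dom: "finite Dom" by (simp add: Dom_def)
lemma card_Dom: "card Dom = 2 * m * n" by (simp add: Dom_def card_cartesian_product)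

lemma phi_in_E: "phi i j \<in> E"
proof -
  have "m > 0" "2 * n > 0" using m2 n1 by auto
  then have "(i mod m, j mod (2 * n)) \<in> Dom" by (simp add: Dom_def)
  then show ?thesis unfolding E_def using phi_mod[of i j] by force
qed

lemma E_sub: "E \<subseteq> carrier G" unfolding E_def by auto

lemma E_mult: "x \<in> E \<Longrightarrow> y \<in> E \<Longrightarrow> x \<otimes> y \<in> E"
  unfolding E_def using phi_mult phi_in_E[unfolded E_def] by auto

lemma one_E: "\<one> \<in> E"
proof -
  have "phi 0 0 = \<one>" by (simp add: phi_def)
  then show ?thesis using phi_in_E by metis
qed

lemma E_inv: assumes x: "x \<in> E" shows "inv x \<in> E"
proof -
  have fE: "finite E" using finite_Dom by (simp add: E_def)
  have "inj_on (\<lambda>y. x \<otimes> y) E" using x E_sub by (intro inj_onI, metis Units_eq Units_l_cancel subsetD)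
  moreover have "(\<lambda>y. x \<otimes> y) ` E \<subseteq> E" using E_mult x by auto
  ultimately have "(\<lambda>y. x \<otimes> y) ` E = E" using fE endo_inj_surj by blast
  then obtain y where y: "y \<in> E" "x \<otimes> y = \<one>" using one_E by (metis imageE)
  then have "inv x = y" using x E_sub by (metis inv_comm inv_equality subsetD)
  then show ?thesis using y by simp
qed

lemma E_subgroup: "subgroup E G"
  by (rule subgroupI, insert E_sub one_E E_inv E_mult, auto)

lemma carrier_E: "carrier G = E"
proof
  have "a = phi 1 0" "b = phi 0 1" using a b by (auto simp: phi_def)
  then have "{a, b} \<subseteq> E" using phi_in_E by (metis empty_subsetI insert_subset)
  then show "carrier G \<subseteq> E" using gen generate_subgroup_incl E_subgroup by auto
qed (rule E_sub)

lemma inj_phi: "inj_on (\<lambda>(i,j). phi i j) Dom"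
proof -
  have "card E = card Dom" using carrier_E cardG card_Dom by simp
  then show ?thesis unfolding E_def using finite_Dom by (simp add: eq_card_imp_inj_on card_image_le inj_on_iff_eq_card)
qed

lemma phi_eq_iff: "i < m \<Longrightarrow> j < 2 * n \<Longrightarrow> k < m \<Longrightarrow> l < 2 * n \<Longrightarrow> phi i j = phi k l \<longleftrightarrow> i = k \<and> j = l"
  using inj_phi unfolding inj_on_def Dom_def by auto

lemma phi_eq_mod_iff: "phi i j = phi k l \<longleftrightarrow> i mod m = k mod m \<and> j mod (2 * n) = l mod (2 * n)"
proof -
  have "m > 0" "2 * n > 0" using m2 n1 by auto
  then show ?thesis using phi_mod[of i j] phi_mod[of k l] phi_eq_iff[of "i mod m" "j mod (2*n)" "k mod m" "l mod (2*n)"]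
    by auto
qed

lemma carrier_phi: "g \<in> carrier G \<Longrightarrow> \<exists>i j. i < m \<and> j < 2 * n \<and> g = phi i j"
  using carrier_E unfolding E_def Dom_def by auto

lemma phi_comm:
  assumes "i < m" "j < 2 * n" "k < m" "l < 2 * n"
  shows "phi i j \<otimes> phi k l = phi k l \<otimes> phi i j \<longleftrightarrow> cc i j k l"
  unfolding phi_mult phi_eq_mod_iff cc_def
  using comm_arith[OF odd_m assms(1,3), of j l] by (simp add: add.commute)

definition ci :: "'g \<Rightarrow> nat" where "ci g = fst (inv_into Dom (\<lambda>(i,j). phi i j) g)"
definition cj :: "'g \<Rightarrow> nat" where "cj g = snd (inv_into Dom (\<lambda>(i,j). phi i j) g)"

lemma coords:
  assumes "g \<in> carrier G" shows "ci g < m" "cj g < 2 * n" "g = phi (ci g) (cj g)"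
proof -
  have g: "g \<in> (\<lambda>(i,j). phi i j) ` Dom" using assms carrier_E E_def by simp
  then have "inv_into Dom (\<lambda>(i,j). phi i j) g \<in> Dom" by (rule inv_into_into)
  then show "ci g < m" "cj g < 2 * n" by (auto simp: ci_def cj_def Dom_def)
  have "(\<lambda>(i,j). phi i j) (inv_into Dom (\<lambda>(i,j). phi i j) g) = g" using g by (rule f_inv_into_f)
  then show "g = phi (ci g) (cj g)" by (simp add: ci_def cj_def case_prod_beta)
qed

lemma coords_phi:
  assumes "i < m" "j < 2 * n" shows "ci (phi i j) = i" "cj (phi i j) = j"
proof -
  have "(i, j) \<in> Dom" using assms by (simp add: Dom_def)
  then have "inv_into Dom (\<lambda>(i,j). phi i j) ((\<lambda>(i,j). phi i j) (i,j)) = (i,j)"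
    by (rule inv_into_f_f[OF inj_phi])
  then show "ci (phi i j) = i" "cj (phi i j) = j" by (simp_all add: ci_def cj_def)
qed

lemma center_iff: "g \<in> group_center G \<longleftrightarrow> g \<in> carrier G \<and> ci g = 0 \<and> even (cj g)"
proof (cases "g \<in> carrier G")
  case True
  note c = coords[OF True]
  have 1: "1 < m" using m2 by simp
  have 2: "1 < 2 * n" "0 < 2 * n" using n1 by auto
  have "g \<in> group_center G \<longleftrightarrow> (\<forall>k<m. \<forall>l<2*n. cc (ci g) (cj g) k l)"
  proof
    assume "g \<in> group_center G"
    then have "\<forall>x\<in>carrier G. g \<otimes> x = x \<otimes> g" by (simp add: group_center_def)
    then show "\<forall>k<m. \<forall>l<2*n. cc (ci g) (cj g) k l"
      using phi_comm[OF c(1,2)] c(3) by (metis phi_closed)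
  next
    assume h: "\<forall>k<m. \<forall>l<2*n. cc (ci g) (cj g) k l"
    have "g \<otimes> x = x \<otimes> g" if x: "x \<in> carrier G" for x
      using phi_comm[OF c(1,2) coords(1,2)[OF x]] h coords(1,2)[OF x] c(3) coords(3)[OF x] by metis
    then show "g \<in> group_center G" using True by (simp add: group_center_def)
  qed
  also have "\<dots> \<longleftrightarrow> ci g = 0 \<and> even (cj g)"
  proof
    assume h: "\<forall>k<m. \<forall>l<2*n. cc (ci g) (cj g) k l"
    have "cc (ci g) (cj g) 1 0" "cc (ci g) (cj g) 0 1" using h 1 2 by auto
    then show "ci g = 0 \<and> even (cj g)" by (auto simp: cc_def)
  qed (auto simp: cc_def)
  finally show ?thesis using True by simp
qed (simp add: group_center_def)

definition part :: "'g \<Rightarrow> nat" where "part g = (if odd (cj g) then ci g else m)"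

lemma V_iff: "g \<in> nc_vertices G \<longleftrightarrow> g \<in> carrier G \<and> \<not> (ci g = 0 \<and> even (cj g))"
  unfolding nc_vertices_def using center_iff by auto

lemma finite_V: "finite (nc_vertices G)"
  using fin unfolding nc_vertices_def by simp

lemma part_le: "g \<in> nc_vertices G \<Longrightarrow> part g \<le> m"
  using coords(1) V_iff by (auto simp: part_def less_imp_le)

lemma comm_V:
  assumes g: "g \<in> nc_vertices G" and h: "h \<in> nc_vertices G"
  shows "g \<otimes> h = h \<otimes> g \<longleftrightarrow> part g = part h"
proof -
  have gc: "g \<in> carrier G" and hc: "h \<in> carrier G" using g h V_iff by auto
  have "g \<otimes> h = h \<otimes> g \<longleftrightarrow> cc (ci g) (cj g) (ci h) (cj h)"
    using phi_comm[OF coords(1,2)[OF gc] coords(1,2)[OF hc]] coords(3)[OF gc] coords(3)[OF hc] by metis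
  also have "\<dots> \<longleftrightarrow> part g = part h"
    using g h V_iff coords(1)[OF gc] coords(1)[OF hc] by (auto simp: cc_def part_def)
  finally show ?thesis .
qed

lemma adj_V:
  assumes g: "g \<in> nc_vertices G" and h: "h \<in> nc_vertices G"
  shows "nc_adj G g h \<longleftrightarrow> part g \<noteq> part h"
  using comm_V[OF g h] g h unfolding nc_adj_def by auto

lemma other_part: assumes g: "g \<in> nc_vertices G" shows "\<exists>w \<in> nc_vertices G. part w \<noteq> part g"
proof (cases "part g = m")
  case True
  have "phi 0 1 \<in> nc_vertices G" "part (phi 0 1) = 0"
    using V_iff coords_phi[of 0 1] m2 n1 by (auto simp: part_def)
  then show ?thesis using True m2 by force
next
  case False
  have "phi 1 0 \<in> nc_vertices G" "part (phi 1 0) = m"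
    using V_iff coords_phi[of 1 0] m2 n1 by (auto simp: part_def)
  then show ?thesis using False by force
qed

lemma walk_len2: "nc_walk G xs \<Longrightarrow> length xs = 2 \<Longrightarrow> nc_adj G (hd xs) (last xs)"
  unfolding nc_walk_def by (auto simp: hd_conv_nth last_conv_nth)

lemma dist_V:
  assumes g: "g \<in> nc_vertices G" and h: "h \<in> nc_vertices G"
  shows "nc_dist G g h = (if g = h then 0 else if part g = part h then 2 else 1)"
proof -
  let ?P = "\<lambda>k. \<exists>xs. nc_walk G xs \<and> hd xs = g \<and> last xs = h \<and> length xs = Suc k"
  have P0: "?P 0 \<longleftrightarrow> g = h"
  proof
    assume "?P 0" then obtain xs where "hd xs = g" "last xs = h" "length xs = 1" by auto
    then show "g = h" by (cases xs, auto)
  next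
    assume "g = h" then show "?P 0" using g by (intro exI[of _ "[g]"], auto simp: nc_walk_def)
  qed
  show ?thesis
  proof (cases "g = h")
    case True then show ?thesis unfolding nc_dist_def using P0 by simp
  next
    case ne: False
    show ?thesis
    proof (cases "part g = part h")
      case False
      then have adj: "nc_adj G g h" using adj_V[OF g h] by simp
      have "?P 1" using adj g h
        by (intro exI[of _ "[g, h]"], auto simp: nc_walk_def nth_Cons split: nat.splits)
      moreover have "\<forall>k. ?P k \<longrightarrow> 1 \<le> k" using P0 ne by (metis less_one not_le)
      ultimately have "nc_dist G g h = 1" unfolding nc_dist_def by (intro Least_equality) auto
      then show ?thesis using ne False by simp
    next
      case True
      obtain w where w: "w \<in> nc_vertices G" "part w \<noteq> part g" using other_part[OF g] by blast
      have a1: "nc_adj G g w" "nc_adj G w h" using adj_V w g h True by auto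
      have "?P 2" using a1 g h w
        by (intro exI[of _ "[g, w, h]"], auto simp: nc_walk_def nth_Cons split: nat.splits)
      moreover have "\<not> ?P 1"
      proof
        assume "?P 1"
        then obtain xs where "nc_walk G xs" "hd xs = g" "last xs = h" "length xs = 2" by auto
        then have "nc_adj G g h" using walk_len2 by auto
        then show False using adj_V[OF g h] True by simp
      qed
      moreover have "\<forall>k. ?P k \<longrightarrow> 2 \<le> k" using P0 ne calculation(2)
        by (metis One_nat_def less_2_cases not_le)
      ultimately have "nc_dist G g h = 2" unfolding nc_dist_def by (intro Least_equality) auto
      then show ?thesis using ne True by simp
    qed
  qed
qed

lemma card_part_small:
  assumes p: "p < m" shows "card {g \<in> nc_vertices G. part g = p} = n"
proof -
  have "{g \<in> nc_vertices G. part g = p} = phi p ` {j. j < 2 * n \<and> odd j}"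
  proof (intro equalityI subsetI)
    fix g assume "g \<in> {g \<in> nc_vertices G. part g = p}"
    then have g: "g \<in> nc_vertices G" "part g = p" by auto
    then have gc: "g \<in> carrier G" using V_iff by auto
    have "odd (cj g)" "ci g = p" using g p by (auto simp: part_def split: if_splits)
    then show "g \<in> phi p ` {j. j < 2 * n \<and> odd j}" using coords[OF gc] by auto
  next
    fix g assume "g \<in> phi p ` {j. j < 2 * n \<and> odd j}"
    then obtain j where j: "j < 2 * n" "odd j" "g = phi p j" by auto
    then show "g \<in> {g \<in> nc_vertices G. part g = p}"
      using coords_phi[OF p j(1)] V_iff by (auto simp: part_def)
  qed
  moreover have "inj_on (phi p) {j. j < 2 * n \<and> odd j}"
    using phi_eq_iff p by (auto intro: inj_onI)
  ultimately show ?thesis by (simp add: card_image card_odd_below)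
qed

lemma card_part_big: "card {g \<in> nc_vertices G. part g = m} = (m - 1) * n"
proof -
  have "{g \<in> nc_vertices G. part g = m} = (\<lambda>(i,j). phi i j) ` ({1..<m} \<times> {j. j < 2 * n \<and> even j})"
  proof (intro equalityI subsetI)
    fix g assume "g \<in> {g \<in> nc_vertices G. part g = m}"
    then have g: "g \<in> nc_vertices G" "part g = m" by auto
    then have gc: "g \<in> carrier G" using V_iff by auto
    have "even (cj g)" using g coords(1)[OF gc] by (auto simp: part_def split: if_splits)
    moreover have "ci g \<noteq> 0" using g(1) V_iff calculation by auto
    ultimately show "g \<in> (\<lambda>(i,j). phi i j) ` ({1..<m} \<times> {j. j < 2 * n \<and> even j})"
      using coords[OF gc] by (auto simp: image_iff intro!: bexI[of _ "(ci g, cj g)"])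
  next
    fix g assume "g \<in> (\<lambda>(i,j). phi i j) ` ({1..<m} \<times> {j. j < 2 * n \<and> even j})"
    then obtain i j where j: "1 \<le> i" "i < m" "j < 2 * n" "even j" "g = phi i j" by auto
    then show "g \<in> {g \<in> nc_vertices G. part g = m}"
      using coords_phi[OF j(2,3)] V_iff by (auto simp: part_def)
  qed
  moreover have "inj_on (\<lambda>(i,j). phi i j) ({1..<m} \<times> {j. j < 2 * n \<and> even j})"
    using phi_eq_iff by (auto intro!: inj_onI)
  ultimately show ?thesis by (simp add: card_image card_cartesian_product card_even_below)
qed

lemma card_V: "card (nc_vertices G) = m * n + (m - 1) * n"
proof -
  have img: "part ` nc_vertices G \<subseteq> {..m}" using part_le by auto
  have "card (nc_vertices G) = (\<Sum>g\<in>nc_vertices G. 1)" by simp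
  also have "\<dots> = (\<Sum>p\<in>{..m}. \<Sum>g\<in>{g \<in> nc_vertices G. part g = p}. 1)"
    using sum.group[OF finite_V _ img, of "\<lambda>_. 1::nat"] by (simp add: Int_def conj_commute)
  also have "\<dots> = (\<Sum>p\<in>{..m}. card {g \<in> nc_vertices G. part g = p})" by simp
  also have "\<dots> = (\<Sum>p<m. card {g \<in> nc_vertices G. part g = p}) + (m - 1) * n"
    by (simp add: lessThan_Suc_atMost[symmetric] card_part_big)
  also have "(\<Sum>p<m. card {g \<in> nc_vertices G. part g = p}) = (\<Sum>p<m. n)"
    by (rule sum.cong, auto simp: card_part_small)
  finally show ?thesis by simp
qed

lemma trans_V:
  assumes g: "g \<in> nc_vertices G"
  shows "nc_trans G g + 2 = card (nc_vertices G) + card {w \<in> nc_vertices G. part w = part g}"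
proof -
  let ?V = "nc_vertices G"
  have "nc_trans G g = (\<Sum>w\<in>?V. nc_dist G w g)" by (simp add: nc_trans_def)
  also have "\<dots> = (\<Sum>w\<in>?V. (if part w = part g then 2::nat else 1) - (if w = g then 2 else 0))"
    by (rule sum.cong, auto simp: dist_V g)
  finally have t: "nc_trans G g = (\<Sum>w\<in>?V. (if part w = part g then 2::nat else 1) - (if w = g then 2 else 0))" .
  have "(\<Sum>w\<in>?V. (if part w = part g then 2::nat else 1) - (if w = g then 2 else 0)) + 2 =
        (\<Sum>w\<in>?V. (if part w = part g then 2::nat else 1) - (if w = g then 2 else 0)) + (\<Sum>w\<in>?V. (if w = g then 2 else 0))"
    using g finite_V by simp
  also have "\<dots> = (\<Sum>w\<in>?V. (if part w = part g then 2::nat else 1))"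
    by (simp only: sum.distrib[symmetric], rule sum.cong, auto)
  also have "\<dots> = (\<Sum>w\<in>?V. 1 + (if part w = part g then 1::nat else 0))"
    by (rule sum.cong, auto)
  also have "\<dots> = card ?V + card {w \<in> ?V. part w = part g}"
    using finite_V by (simp only: sum.distrib sum.If_cases, simp add: Int_def conj_commute)
  finally show ?thesis using t by simp
qed

lemma DQ_step1:
  assumes f: "bij_betw f {0..<card (nc_vertices G)} (nc_vertices G)"
  defines "N \<equiv> card (nc_vertices G)"
  defines "sp \<equiv> \<lambda>p::nat. if p < m then n else (m - 1) * n"
  defines "C \<equiv> \<lambda>p q::nat. if p = q then 2 else (1::real)"
  defines "d \<equiv> \<lambda>p. real N + real (sp p) - 4"
  shows "char_poly (nc_DQ_mat G f) = (\<Prod>p<m+1. [:- d p, 1:] ^ (sp p - 1)) *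
     char_poly (mat (m+1) (m+1) (\<lambda>(p,q). C p q * real (sp q) + (if p = q then d p else 0)))"
proof -
  let ?V = "nc_vertices G"
  let ?A = "nc_DQ_mat G f"
  let ?\<pi> = "\<lambda>u. part (f u)"
  have fu: "f u \<in> ?V" if "u < N" for u using f that unfolding N_def bij_betw_def by auto
  have finj: "f u = f v \<longleftrightarrow> u = v" if "u < N" "v < N" for u v
    using f that unfolding N_def bij_betw_def inj_on_def by auto
  have cpart: "card {g \<in> ?V. part g = p} = sp p" if "p < m + 1" for p
    using that card_part_small card_part_big by (cases "p < m") (auto simp: sp_def less_Suc_eq)
  have s: "card {u. u < N \<and> ?\<pi> u = p} = sp p" if "p < m + 1" for p
  proof -
    have "f ` {u. u < N \<and> ?\<pi> u = p} = {g \<in> ?V. part g = p}"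
    proof (intro equalityI subsetI)
      fix g assume "g \<in> f ` {u. u < N \<and> ?\<pi> u = p}"
      then show "g \<in> {g \<in> ?V. part g = p}" using fu by auto
    next
      fix g assume g: "g \<in> {g \<in> ?V. part g = p}"
      then have "g \<in> f ` {0..<N}" using f unfolding N_def bij_betw_def by auto
      then obtain u where "u < N" "g = f u" by auto
      then show "g \<in> f ` {u. u < N \<and> ?\<pi> u = p}" using g by auto
    qed
    moreover have "inj_on f {u. u < N \<and> ?\<pi> u = p}"
      using f unfolding N_def bij_betw_def inj_on_def by auto
    then have "card (f ` {u. u < N \<and> ?\<pi> u = p}) = card {u. u < N \<and> ?\<pi> u = p}" by (rule card_image)
    ultimately show ?thesis using cpart[OF that] by simp
  qed
  have A: "?A \<in> carrier_mat N N" by (simp add: nc_DQ_mat_def N_def)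
  have \<pi>: "?\<pi> u < m + 1" if "u < N" for u using part_le[OF fu[OF that]] by simp
  have entries: "?A $$ (u,v) = C (?\<pi> u) (?\<pi> v) + (if u = v then d (?\<pi> u) else 0)"
    if u: "u < N" and v: "v < N" for u v
  proof -
    have "?A $$ (u,v) = nc_DQ G (f u) (f v)" using u v by (simp add: nc_DQ_mat_def N_def)
    also have "\<dots> = C (?\<pi> u) (?\<pi> v) + (if u = v then d (?\<pi> u) else 0)"
    proof (cases "u = v")
      case True
      have "nc_trans G (f u) + 2 = N + sp (?\<pi> u)"
        using trans_V[OF fu[OF u]] cpart[OF \<pi>[OF u]] by (simp add: N_def)
      then have "real (nc_trans G (f u)) = real N + real (sp (?\<pi> u)) - 2"
        by (metis add_diff_cancel_right' of_nat_add of_nat_numeral)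
      then show ?thesis using True dist_V[OF fu[OF u] fu[OF u]]
        by (simp add: nc_DQ_def C_def d_def)
    next
      case False
      then show ?thesis using finj[OF u v] dist_V[OF fu[OF u] fu[OF v]]
        by (simp add: nc_DQ_def C_def)
    qed
    finally show ?thesis .
  qed
  have spos: "card {u. u < N \<and> ?\<pi> u = p} \<ge> 1" if "p < m + 1" for p
    using s[OF that] n1 m2 by (simp add: sp_def) (metis Suc_le_eq Suc_lessD diff_Suc_1 less_diff_conv nat_0_less_mult_iff numeral_2_eq_2 plus_1_eq_Suc zero_less_diff)
  have "char_poly ?A = (\<Prod>p<m+1. [:- d p, 1:] ^ (card {u. u < N \<and> ?\<pi> u = p} - 1)) *
     char_poly (mat (m+1) (m+1) (\<lambda>(p,q). C p q * real (card {u. u < N \<and> ?\<pi> u = q}) + (if p = q then d p else 0)))"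
    by (rule equitable_char_poly[OF A \<pi> entries spos])
  also have "(\<Prod>p<m+1. [:- d p, 1:] ^ (card {u. u < N \<and> ?\<pi> u = p} - 1)) = (\<Prod>p<m+1. [:- d p, 1:] ^ (sp p - 1))"
    by (rule prod.cong, auto simp: s)
  also have "mat (m+1) (m+1) (\<lambda>(p,q). C p q * real (card {u. u < N \<and> ?\<pi> u = q}) + (if p = q then d p else 0))
     = mat (m+1) (m+1) (\<lambda>(p,q). C p q * real (sp q) + (if p = q then d p else 0))"
    by (rule eq_matI, auto simp: s)
  finally show ?thesis .
qed

lemma real_N: "real (card (nc_vertices G)) = real m * real n + (real m - 1) * real n"
  using card_V m2 by (simp add: of_nat_diff)

lemma DQ_step2:
  defines "N \<equiv> card (nc_vertices G)"
  defines "sp \<equiv> \<lambda>p::nat. if p < m then n else (m - 1) * n"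
  defines "C \<equiv> \<lambda>p q::nat. if p = q then 2 else (1::real)"
  defines "d \<equiv> \<lambda>p. real N + real (sp p) - 4"
  defines "C2 \<equiv> \<lambda>i j::nat. if i = 0 then (if j = 0 then real n else (real m - 1) * real n) else (if j = 0 then real n else 0)"
  defines "d2 \<equiv> \<lambda>i::nat. if i = 0 then 2 * real m * real n + real n - 4 else 5 * real m * real n - 4 * real n - 4"
  shows "char_poly (mat (m+1) (m+1) (\<lambda>(p,q). C p q * real (sp q) + (if p = q then d p else 0))) =
     [:- d2 0, 1:] ^ (m - 1) *
     char_poly (mat 2 2 (\<lambda>(i,j). C2 i j * real (if j = 0 then m else 1) + (if i = j then d2 i else 0)))"
proof -
  let ?Q = "mat (m+1) (m+1) (\<lambda>(p,q). C p q * real (sp q) + (if p = q then d p else 0))"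
  define pi2 where "pi2 = (\<lambda>p::nat. if p < m then 0 else (1::nat))"
  have rN: "real N = real m * real n + (real m - 1) * real n" using real_N by (simp add: N_def)
  have rs: "real (sp q) = (if q < m then real n else (real m - 1) * real n)" for q
    using m2 by (simp add: sp_def of_nat_diff)
  have Q: "?Q \<in> carrier_mat (m+1) (m+1)" by simp
  have \<pi>: "pi2 p < 2" for p by (simp add: pi2_def)
  have entries: "?Q $$ (p,q) = C2 (pi2 p) (pi2 q) + (if p = q then d2 (pi2 p) else 0)"
    if "p < m + 1" "q < m + 1" for p q
    using that by (auto simp: C_def d_def C2_def d2_def rN rs algebra_simps pi2_def)
  have s0: "{p. p < m + 1 \<and> pi2 p = 0} = {..<m}" by (auto simp: pi2_def)
  have s1: "{p. p < m + 1 \<and> pi2 p = 1} = {m}" by (auto simp: pi2_def)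
  have s: "card {p. p < m + 1 \<and> pi2 p = i} = (if i = 0 then m else 1)" if "i < 2" for i
    using that s0 s1 by (cases "i = 0", auto simp: less_2_cases_iff)
  have spos: "card {p. p < m + 1 \<and> pi2 p = i} \<ge> 1" if "i < 2" for i
    using s[OF that] m2 by simp
  have "char_poly ?Q = (\<Prod>i<2. [:- d2 i, 1:] ^ (card {p. p < m + 1 \<and> pi2 p = i} - 1)) *
     char_poly (mat 2 2 (\<lambda>(i,j). C2 i j * real (card {p. p < m + 1 \<and> pi2 p = j}) + (if i = j then d2 i else 0)))"
    by (rule equitable_char_poly[OF Q _ entries spos], auto simp: pi2_def)
  also have "(\<Prod>i<2. [:- d2 i, 1:] ^ (card {p. p < m + 1 \<and> pi2 p = i} - 1)) = [:- d2 0, 1:] ^ (m - 1)"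
    using s by (simp add: numeral_2_eq_2)
  also have "mat 2 2 (\<lambda>(i,j). C2 i j * real (card {p. p < m + 1 \<and> pi2 p = j}) + (if i = j then d2 i else 0))
    = mat 2 2 (\<lambda>(i,j). C2 i j * real (if j = 0 then m else 1) + (if i = j then d2 i else 0))"
    using s[simplified] by (intro eq_matI, auto simp: less_2_cases_iff)
  finally show ?thesis .
qed

lemma char_poly_2x2:
  fixes M :: "nat \<Rightarrow> nat \<Rightarrow> real"
  shows "char_poly (mat 2 2 (\<lambda>(i,j). M i j)) = [: M 0 0 * M 1 1 - M 0 1 * M 1 0, - (M 0 0 + M 1 1), 1:]"
proof -
  have "char_poly (mat 2 2 (\<lambda>(i,j). M i j)) = [:- M 0 0, 1:] * [:- M 1 1, 1:] - [:- M 0 1:] * [:- M 1 0:]"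
    unfolding char_poly_def
    by (subst det_2x2[of _], auto simp: char_poly_matrix_def)
  also have "\<dots> = [: M 0 0 * M 1 1 - M 0 1 * M 1 0, - (M 0 0 + M 1 1), 1:]" by simp
  finally show ?thesis .
qed

lemma DQ_final:
  fixes t1 t2 :: real
  assumes f: "bij_betw f {0..<card (nc_vertices G)} (nc_vertices G)"
    and t1: "(real m - 1) * t1 ^ 2 - (2 * real m - 5) * t1 - real m = 0"
    and t2: "(real m - 1) * t2 ^ 2 - (2 * real m - 5) * t2 - real m = 0"
    and t12: "t1 \<noteq> t2"
  shows "char_poly (nc_DQ_mat G f) =
    (\<Prod>e \<in># replicate_mset (m * (n - 1)) (2 * real m * real n - 4)
          + replicate_mset (m - 1) ((2 * real m + 1) * real n - 4)
          + replicate_mset ((m - 1) * n - 1) ((3 * real m - 2) * real n - 4)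
          + {# real n * t1 * (real m - 1) + (3 * real m * real n + real n - 4),
               real n * t2 * (real m - 1) + (3 * real m * real n + real n - 4) #}.
       [:- e, 1:])"
proof -
  define N where "N \<equiv> card (nc_vertices G)"
  define sp where "sp \<equiv> \<lambda>p::nat. if p < m then n else (m - 1) * n"
  define C where "C \<equiv> \<lambda>(p::nat) (q::nat). if p = q then 2 else (1::real)"
  define d where "d \<equiv> \<lambda>p. real N + real (sp p) - 4"
  define C2 where "C2 \<equiv> \<lambda>(i::nat) (j::nat). if i = 0 then (if j = 0 then real n else (real m - 1) * real n) else (if j = 0 then real n else 0)"
  define d2 where "d2 \<equiv> \<lambda>i::nat. if i = 0 then 2 * real m * real n + real n - 4 else 5 * real m * real n - 4 * real n - 4"
  define ea where "ea = 2 * real m * real n - 4"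
  define eb where "eb = (2 * real m + 1) * real n - 4"
  define ec where "ec = (3 * real m - 2) * real n - 4"
  define e1 where "e1 = real n * t1 * (real m - 1) + (3 * real m * real n + real n - 4)"
  define e2 where "e2 = real n * t2 * (real m - 1) + (3 * real m * real n + real n - 4)"
  have rN: "real N = real m * real n + (real m - 1) * real n" using real_N by (simp add: N_def)
  have dsmall: "d p = ea" if "p < m" for p using that by (simp add: d_def sp_def rN ea_def algebra_simps)
  have dbig: "d m = ec" using m2 by (simp add: d_def sp_def rN ec_def of_nat_diff algebra_simps)
  have d20: "d2 0 = eb" by (simp add: d2_def eb_def algebra_simps)
  have "char_poly (nc_DQ_mat G f) = (\<Prod>p<m+1. [:- d p, 1:] ^ (sp p - 1)) *
     ([:- d2 0, 1:] ^ (m - 1) *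
     char_poly (mat 2 2 (\<lambda>(i,j). C2 i j * real (if j = 0 then m else 1) + (if i = j then d2 i else 0))))"
    using DQ_step1[OF f] DQ_step2 unfolding N_def sp_def C_def d_def C2_def d2_def by simp
  also have "(\<Prod>p<m+1. [:- d p, 1:] ^ (sp p - 1)) = [:- ea, 1:] ^ (m * (n - 1)) * [:- ec, 1:] ^ ((m - 1) * n - 1)"
  proof -
    have "(\<Prod>p<m+1. [:- d p, 1:] ^ (sp p - 1)) = (\<Prod>p<m. [:- d p, 1:] ^ (sp p - 1)) * [:- d m, 1:] ^ (sp m - 1)"
      by simp
    also have "(\<Prod>p<m. [:- d p, 1:] ^ (sp p - 1)) = (\<Prod>p<m. [:- ea, 1:] ^ (n - 1))"
      by (rule prod.cong, auto simp: dsmall sp_def)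
    also have "\<dots> = [:- ea, 1:] ^ (m * (n - 1))" by (simp add: power_mult[symmetric] mult.commute)
    finally show ?thesis using dbig by (simp add: sp_def)
  qed
  also have "char_poly (mat 2 2 (\<lambda>(i,j). C2 i j * real (if j = 0 then m else 1) + (if i = j then d2 i else 0)))
     = [:- e1, 1:] * [:- e2, 1:]"
  proof -
    have vs: "(real m - 1) * (t1 + t2) = 2 * real m - 5"
    proof -
      have "(t1 - t2) * ((real m - 1) * (t1 + t2) - (2 * real m - 5)) = 0"
        using t1 t2 by (simp add: algebra_simps power2_eq_square)
      then show ?thesis using t12 by simp
    qed
    have vp: "(real m - 1) * (t1 * t2) = - real m"
    proof -
      have "(real m - 1) * t1 * t1 - (real m - 1) * (t1 + t2) * t1 - real m = 0"
        using t1 vs by (simp add: power2_eq_square)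
      moreover have "(real m - 1) * (t1 * t2) + real m = -((real m - 1) * t1 * t1 - (real m - 1) * (t1 + t2) * t1 - real m)"
        by (simp add: algebra_simps)
      ultimately show ?thesis by linarith
    qed
    have "char_poly (mat 2 2 (\<lambda>(i,j). C2 i j * real (if j = 0 then m else 1) + (if i = j then d2 i else 0)))
      = [: (real n * real m + d2 0) * d2 1 - (real m - 1) * real n * (real n * real m), - (real n * real m + d2 0 + d2 1), 1:]"
      using char_poly_2x2[of "\<lambda>i j. C2 i j * real (if j = 0 then m else 1) + (if i = j then d2 i else 0)"]
      by (simp add: C2_def)
    also have "\<dots> = [: e1 * e2, - (e1 + e2), 1:]"
    proof -
      have "e1 + e2 = real n * ((real m - 1) * (t1 + t2)) + 2 * (3 * real m * real n + real n - 4)"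
        unfolding e1_def e2_def by (simp add: algebra_simps)
      also have "\<dots> = real n * real m + d2 0 + d2 1"
        unfolding vs d2_def by (simp add: algebra_simps)
      finally have "e1 + e2 = real n * real m + d2 0 + d2 1" .
      moreover have "e1 * e2 = (real n * real m + d2 0) * d2 1 - (real m - 1) * real n * (real n * real m)"
      proof -
        have "e1 * e2 = (3 * real m * real n + real n - 4) ^ 2 + (3 * real m * real n + real n - 4) * real n * ((real m - 1) * (t1 + t2))
            + real n ^ 2 * (real m - 1) * ((real m - 1) * (t1 * t2))"
          unfolding e1_def e2_def by (simp add: algebra_simps power2_eq_square)
        also have "\<dots> = (real n * real m + d2 0) * d2 1 - (real m - 1) * real n * (real n * real m)"
          unfolding vs vp d2_def by (simp add: algebra_simps power2_eq_square)
        finally show ?thesis .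
      qed
      ultimately show ?thesis by simp
    qed
    also have "\<dots> = [:- e1, 1:] * [:- e2, 1:]" by simp
    finally show ?thesis .
  qed
  finally have cp: "char_poly (nc_DQ_mat G f) = [:- ea, 1:] ^ (m * (n - 1)) * [:- ec, 1:] ^ ((m - 1) * n - 1) *
     ([:- eb, 1:] ^ (m - 1) * ([:- e1, 1:] * [:- e2, 1:]))" using d20 by simp
  show ?thesis unfolding cp ea_def[symmetric] eb_def[symmetric] ec_def[symmetric] e1_def[symmetric] e2_def[symmetric]
    by (simp only: image_mset_union prod_mset.union image_replicate_mset prod_mset_replicate_mset
        image_mset_add_mset image_mset_empty prod_mset.add_mset prod_mset_empty mult_1_right mult.assoc)
      (rule arg_cong[where f="\<lambda>x. [:- ea, 1:] ^ (m * (n - 1)) * x"], rule mult.left_commute)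
qed

end

theorem theorem6p5:
  fixes G :: "('g, 'c) monoid_scheme" and a b :: 'g and m n :: nat and t1 t2 :: real
    and f :: "nat \<Rightarrow> 'g"
  assumes "odd m" and "m > 2" and "n \<ge> 1"
    and "group G"
    and "a \<in> carrier G" and "b \<in> carrier G"
    and "carrier G = generate G {a, b}"
    and "finite (carrier G)" and "card (carrier G) = 2 * m * n"
    and "a [^]\<^bsub>G\<^esub> m = \<one>\<^bsub>G\<^esub>" and "b [^]\<^bsub>G\<^esub> (2 * n) = \<one>\<^bsub>G\<^esub>"
    and "b \<otimes>\<^bsub>G\<^esub> a \<otimes>\<^bsub>G\<^esub> inv\<^bsub>G\<^esub> b = inv\<^bsub>G\<^esub> a"
    and "(real m - 1) * t1 ^ 2 - (2 * real m - 5) * t1 - real m = 0"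
    and "(real m - 1) * t2 ^ 2 - (2 * real m - 5) * t2 - real m = 0"
    and "t1 \<noteq> t2"
    and "bij_betw f {0..<card (nc_vertices G)} (nc_vertices G)"
  shows "char_poly (nc_DQ_mat G f) =
    (\<Prod>e \<in># replicate_mset (m * (n - 1)) (2 * real m * real n - 4)
          + replicate_mset (m - 1) ((2 * real m + 1) * real n - 4)
          + replicate_mset ((m - 1) * n - 1) ((3 * real m - 2) * real n - 4)
          + {# real n * t1 * (real m - 1) + (3 * real m * real n + real n - 4),
               real n * t2 * (real m - 1) + (3 * real m * real n + real n - 4) #}.
       [:- e, 1:])"
  proof -
  interpret M: metacyc G a b m n
    using assms by (simp add: metacyc_def metacyc_axioms_def)
  show ?thesis by (rule M.DQ_final) (use assms in auto)
qed

end
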